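(* Let $\mathcal{X}$ be a totally ordered set equipped with a $\sigma$-algebra $\mathcal{F}$, let $n\ge 1$, and let $\mathcal{S}_{n,\bm{\nu}}$ be the set of labelings $\sigma:\{1,\dots,n\}\to\{1,\dots,K\}$ with $|\sigma^{-1}(k)|=n\nu_k$ for each $k$, for a fixed vector of group proportions $\bm{\nu}=(\nu_1,\dots,\nu_K)$. For $\theta\in\{0,1\}$ and $k\in\{1,\dots,K\}$ let $P_{\theta,k}$ be probability measures on $(\mathcal{X},\mathcal{F})$, and for $\sigma\in\mathcal{S}_{n,\bm{\nu}}$ let $\mathbb{P}_{\theta;\sigma}=\bigotimes_{i=1}^n P_{\theta,\sigma(i)}$ on $(\mathcal{X}^n,\mathcal{F}^{\otimes n})$. For a measurable test $\phi:\mathcal{X}^n\to[0,1]$ define $\mathsf{P_F}(\phi)=\max_{\sigma\in\mathcal{S}_{n,\bm{\nu}}}\mathbb{E}_{\mathbb{P}_{0;\sigma}}[\phi(X^n)]$ and $\mathsf{P_M}(\phi)=\max_{\sigma\in\mathcal{S}_{n,\bm{\nu}}}\mathbb{E}_{\mathbb{P}_{1;\sigma}}[1-\phi(X^n)]$. Then for any measurable test $\psi:\mathcal{X}^n\to[0,1]$ there exists a symmetric test $\phi$ such that $\mathsf{P_F}(\phi)\le\mathsf{P_F}(\psi)$ and $\mathsf{P_M}(\phi)\le\mathsf{P_M}(\psi)$.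
   Context: The ordering map $\Pi:\mathcal{X}^n\to\tilde{\mathcal{X}}^n$, where $\tilde{\mathcal{X}}^n=\{x^n\in\mathcal{X}^n: x_1\ge x_2\ge\dots\ge x_n\}$ with $\sigma$-algebra $\tilde{\mathcal{F}}=\mathcal{F}^{\otimes n}\cap\tilde{\mathcal{X}}^n$, sends $x^n$ to the rearrangement of its coordinates in non-increasing order. A test $\phi:\mathcal{X}^n\to[0,1]$ is called symmetric if $\phi=\tilde{\phi}\circ\Pi$ for some $\tilde{\mathcal{F}}$-measurable $\tilde{\phi}:\tilde{\mathcal{X}}^n\to[0,1]$. The $\sigma$-algebra $\mathcal{F}^{\otimes n}$ is assumed closed under coordinate permutations: for every $\mathcal{A}\in\mathcal{F}^{\otimes n}$ and every permutation $\tau$ of $\{1,\dots,n\}$, $\{(x_{\tau(1)},\dots,x_{\tau(n)}): x^n\in\mathcal{A}\}\in\mathcal{F}^{\otimes n}$. *)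

theory Defs
  imports "HOL-Probability.Probability"
begin

text \<open>Points of X^n are functions on the index set {..<n} (coordinates 0..n-1),
  extensional outside, as in the product measure PiM.\<close>

abbreviation prodM :: "nat \<Rightarrow> 'a measure \<Rightarrow> (nat \<Rightarrow> 'a) measure" where
  "prodM n M \<equiv> PiM {..<n} (\<lambda>_. M)"

definition ord_map :: "nat \<Rightarrow> (nat \<Rightarrow> 'a::linorder) \<Rightarrow> (nat \<Rightarrow> 'a)" where
  "ord_map n x = (\<lambda>i. if i < n then rev (sort (map x [0..<n])) ! i else undefined)"

definition ordered_pts :: "nat \<Rightarrow> 'a::linorder measure \<Rightarrow> (nat \<Rightarrow> 'a) set" where
  "ordered_pts n M = {x \<in> space (prodM n M). \<forall>i j. i \<le> j \<and> j < n \<longrightarrow> x j \<le> x i}"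

definition symmetric_test :: "nat \<Rightarrow> 'a::linorder measure \<Rightarrow> ((nat \<Rightarrow> 'a) \<Rightarrow> real) \<Rightarrow> bool" where
  "symmetric_test n M \<phi> \<longleftrightarrow>
     (\<exists>\<phi>t. \<phi>t \<in> borel_measurable (restrict_space (prodM n M) (ordered_pts n M)) \<and>
           (\<forall>y\<in>ordered_pts n M. 0 \<le> \<phi>t y \<and> \<phi>t y \<le> 1) \<and>
           (\<forall>x\<in>space (prodM n M). \<phi> x = \<phi>t (ord_map n x)))"

text \<open>Labelings sigma : {1..n} -> {1..K} with |sigma^{-1}(k)| = n nu_k (indices shifted to 0..n-1).\<close>
definition labelings :: "nat \<Rightarrow> nat \<Rightarrow> (nat \<Rightarrow> real) \<Rightarrow> (nat \<Rightarrow> nat) set" where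
  "labelings n K \<nu> = {\<sigma> \<in> {..<n} \<rightarrow>\<^sub>E {1..K}.
      \<forall>k\<in>{1..K}. real (card {i\<in>{..<n}. \<sigma> i = k}) = real n * \<nu> k}"

definition P_F :: "nat \<Rightarrow> nat \<Rightarrow> (nat \<Rightarrow> real) \<Rightarrow> (nat \<Rightarrow> nat \<Rightarrow> 'a measure)
                   \<Rightarrow> ((nat \<Rightarrow> 'a) \<Rightarrow> real) \<Rightarrow> real" where
  "P_F n K \<nu> P \<phi> = Max ((\<lambda>\<sigma>. \<integral>x. \<phi> x \<partial>(PiM {..<n} (\<lambda>i. P 0 (\<sigma> i)))) ` labelings n K \<nu>)"

definition P_M :: "nat \<Rightarrow> nat \<Rightarrow> (nat \<Rightarrow> real) \<Rightarrow> (nat \<Rightarrow> nat \<Rightarrow> 'a measure)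
                   \<Rightarrow> ((nat \<Rightarrow> 'a) \<Rightarrow> real) \<Rightarrow> real" where
  "P_M n K \<nu> P \<phi> = Max ((\<lambda>\<sigma>. \<integral>x. 1 - \<phi> x \<partial>(PiM {..<n} (\<lambda>i. P 1 (\<sigma> i)))) ` labelings n K \<nu>)"

end

theory Submission
  imports Defs "HOL-Combinatorics.Combinatorics"
begin

definition permx :: "nat \<Rightarrow> (nat \<Rightarrow> nat) \<Rightarrow> (nat \<Rightarrow> 'a) \<Rightarrow> (nat \<Rightarrow> 'a)" where
  "permx n \<tau> x = (\<lambda>i\<in>{..<n}. x (\<tau> i))"

lemma permx_meas:
  assumes "\<tau> permutes {..<n}"
  shows "permx n \<tau> \<in> measurable (prodM n M) (prodM n M)"
  unfolding permx_def
  apply (rule measurable_restrict)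
  using permutes_in_image[OF assms] by auto

lemma permx_comp:
  assumes "\<tau> permutes {..<n}"
  shows "permx n \<tau> (permx n \<tau>0 x) = permx n (\<tau>0 \<circ> \<tau>) x"
  using permutes_in_image[OF assms] unfolding permx_def by (auto simp: fun_eq_iff)

lemma labelings_perm:
  assumes "\<sigma> \<in> labelings n K \<nu>" "\<tau> permutes {..<n}"
  shows "restrict (\<sigma> \<circ> \<tau>) {..<n} \<in> labelings n K \<nu>"
proof -
  have img: "\<tau> ` {..<n} = {..<n}" using permutes_image[OF assms(2)] .
  have inj: "inj_on \<tau> A" for A using permutes_inj[OF assms(2)] by (meson inj_on_subset subset_UNIV)
  have c: "card {i\<in>{..<n}. \<sigma> (\<tau> i) = k} = card {i\<in>{..<n}. \<sigma> i = k}" for k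
  proof -
    have "\<tau> ` {i\<in>{..<n}. \<sigma> (\<tau> i) = k} = {i\<in>{..<n}. \<sigma> i = k}"
    proof
      show "\<tau> ` {i \<in> {..<n}. \<sigma> (\<tau> i) = k} \<subseteq> {i \<in> {..<n}. \<sigma> i = k}"
        using img by auto
      show "{i \<in> {..<n}. \<sigma> i = k} \<subseteq> \<tau> ` {i \<in> {..<n}. \<sigma> (\<tau> i) = k}"
      proof
        fix j assume j: "j \<in> {i \<in> {..<n}. \<sigma> i = k}"
        then obtain i where "i \<in> {..<n}" "j = \<tau> i" using img by (metis (no_types, lifting) imageE mem_Collect_eq)
        then show "j \<in> \<tau> ` {i \<in> {..<n}. \<sigma> (\<tau> i) = k}" using j by auto
      qed
    qed
    then show ?thesis using card_image[OF inj] by metis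
  qed
  have sPi: "\<sigma> \<in> {..<n} \<rightarrow>\<^sub>E {1..K}" using assms(1) unfolding labelings_def by blast
  have sC: "\<forall>k\<in>{1..K}. real (card {i\<in>{..<n}. \<sigma> i = k}) = real n * \<nu> k"
    using assms(1) unfolding labelings_def by blast
  have r1: "restrict (\<sigma> \<circ> \<tau>) {..<n} \<in> {..<n} \<rightarrow>\<^sub>E {1..K}"
  proof (rule PiE_I)
    fix i assume i: "i \<in> {..<n}"
    then have "\<tau> i \<in> {..<n}" using permutes_in_image[OF assms(2)] by simp
    then have "\<sigma> (\<tau> i) \<in> {1..K}" using sPi by (meson PiE_mem)
    then show "restrict (\<sigma> \<circ> \<tau>) {..<n} i \<in> {1..K}" using i by simp
  next
    fix i assume "i \<notin> {..<n}" then show "restrict (\<sigma> \<circ> \<tau>) {..<n} i = undefined" by simp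
  qed
  have r2: "{i\<in>{..<n}. restrict (\<sigma> \<circ> \<tau>) {..<n} i = k} = {i\<in>{..<n}. \<sigma> (\<tau> i) = k}" for k
    by (rule Collect_cong) simp
  have "\<forall>k\<in>{1..K}. real (card {i\<in>{..<n}. restrict (\<sigma> \<circ> \<tau>) {..<n} i = k}) = real n * \<nu> k"
    unfolding r2 c using sC by blast
  then show ?thesis using r1 unfolding labelings_def by blast
qed

lemma finite_labelings: "finite (labelings n K \<nu>)"
  by (rule finite_subset[of _ "{..<n} \<rightarrow>\<^sub>E {1..K}"]) (auto simp: labelings_def intro: finite_PiE)

lemma avg_bound:
  fixes Q :: "nat \<Rightarrow> 'a measure" and g :: "(nat \<Rightarrow> 'a) \<Rightarrow> real"
  assumes Q: "\<And>k. k \<in> {1..K} \<Longrightarrow> prob_space (Q k)"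
    and QS: "\<And>k. k \<in> {1..K} \<Longrightarrow> sets (Q k) = sets M"
    and g: "g \<in> borel_measurable (prodM n M)"
    and gb: "\<forall>x\<in>space (prodM n M). 0 \<le> g x \<and> g x \<le> 1"
    and \<sigma>: "\<sigma> \<in> labelings n K \<nu>"
  shows "(\<integral>x. (\<Sum>\<tau>\<in>{\<tau>. \<tau> permutes {..<n}}. g (permx n \<tau> x)) / fact n \<partial>(PiM {..<n} (\<lambda>i. Q (\<sigma> i))))
     \<le> Max ((\<lambda>\<sigma>. \<integral>x. g x \<partial>(PiM {..<n} (\<lambda>i. Q (\<sigma> i)))) ` labelings n K \<nu>)"
proof -
  let ?Perm = "{\<tau>. \<tau> permutes {..<n}}"
  let ?N = "PiM {..<n} (\<lambda>i. Q (\<sigma> i))"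
  let ?Mx = "Max ((\<lambda>\<sigma>. \<integral>x. g x \<partial>(PiM {..<n} (\<lambda>i. Q (\<sigma> i)))) ` labelings n K \<nu>)"
  have \<sigma>r: "\<And>i. i < n \<Longrightarrow> \<sigma> i \<in> {1..K}" using \<sigma> unfolding labelings_def by auto
  have fin: "finite ?Perm" by (rule finite_permutations) simp
  have sN: "sets ?N = sets (prodM n M)"
    apply (rule sets_PiM_cong) using QS \<sigma>r by auto
  interpret N: prob_space ?N by (rule prob_space_PiM) (use Q \<sigma>r in auto)
  have trm: "(\<integral>x. g (permx n \<tau> x) \<partial>?N) \<le> ?Mx" if \<tau>: "\<tau> permutes {..<n}" for \<tau>
  proof -
    let ?N' = "PiM {..<n} (\<lambda>i. Q (\<sigma> (\<tau> i)))"
    have dist: "distr ?N ?N' (permx n \<tau>) = ?N'"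
      unfolding permx_def
      apply (rule distr_PiM_reindex)
      using \<sigma>r Q permutes_inj[OF \<tau>] permutes_in_image[OF \<tau>] by (auto intro: inj_on_subset[of _ UNIV])
    have sN': "sets ?N' = sets (prodM n M)"
      apply (rule sets_PiM_cong)
      using \<sigma>r QS permutes_in_image[OF \<tau>] by auto
    have pm: "permx n \<tau> \<in> measurable ?N ?N'"
      using permx_meas[OF \<tau>, of M] by (simp add: measurable_cong_sets[OF sN sN'])
    have gN': "g \<in> borel_measurable ?N'" using g by (simp add: measurable_cong_sets[OF sN' refl])
    have "(\<integral>x. g (permx n \<tau> x) \<partial>?N) = (\<integral>x. g x \<partial>?N')"
      using integral_distr[OF pm gN'] dist by simp
    also have "?N' = PiM {..<n} (\<lambda>i. Q (restrict (\<sigma> \<circ> \<tau>) {..<n} i))"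
      by (rule PiM_cong) auto
    also have "(\<integral>x. g x \<partial>\<dots>) \<le> ?Mx"
      by (rule Max_ge) (use finite_labelings labelings_perm[OF \<sigma> \<tau>] in blast)+
    finally show ?thesis .
  qed
  have intg: "integrable ?N (\<lambda>x. g (permx n \<tau> x))" if \<tau>: "\<tau> permutes {..<n}" for \<tau>
  proof (rule N.integrable_const_bound[where B=1])
    have sp: "space ?N = space (prodM n M)" using sN by (rule sets_eq_imp_space_eq)
    have "permx n \<tau> x \<in> space (prodM n M)" if "x \<in> space ?N" for x
      using measurable_space[OF permx_meas[OF \<tau>, of M]] that sp by auto
    then show "AE x in ?N. norm (g (permx n \<tau> x)) \<le> 1" using gb by auto
    show "(\<lambda>x. g (permx n \<tau> x)) \<in> borel_measurable ?N"
      using measurable_comp[OF permx_meas[OF \<tau>, of M] g]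
      by (simp add: measurable_cong_sets[OF sN refl] o_def)
  qed
  have "(\<integral>x. (\<Sum>\<tau>\<in>?Perm. g (permx n \<tau> x)) / fact n \<partial>?N)
      = (\<Sum>\<tau>\<in>?Perm. (\<integral>x. g (permx n \<tau> x) \<partial>?N)) / fact n"
    using intg by (simp add: Bochner_Integration.integral_sum)
  also have "\<dots> \<le> (\<Sum>\<tau>\<in>?Perm. ?Mx) / fact n"
    by (intro divide_right_mono sum_mono trm) auto
  also have "\<dots> = ?Mx"
    using card_permutations[of "{..<n}" n] by simp
  finally show ?thesis .
qed

lemma ord_map_perm:
  obtains \<tau>0 where "\<tau>0 permutes {..<n}" "ord_map n x = permx n \<tau>0 x"
proof -
  let ?xs = "map x [0..<n]"
  have "mset (rev (sort ?xs)) = mset ?xs" by simp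
  then obtain p where p: "p permutes {..<length ?xs}" "permute_list p ?xs = rev (sort ?xs)"
    by (rule mset_eq_permutation)
  have pn: "p permutes {..<n}" using p(1) by simp
  have "ord_map n x = permx n p x"
  proof
    fix i show "ord_map n x i = permx n p x i"
    proof (cases "i < n")
      case True
      have "rev (sort ?xs) ! i = ?xs ! p i" using permute_list_nth[OF p(1)] p(2) True by (metis length_map length_upt diff_zero)
      also have "\<dots> = x (p i)" using permutes_in_image[OF pn] True by simp
      finally show ?thesis using True by (simp add: ord_map_def permx_def)
    next
      case False then show ?thesis by (simp add: ord_map_def permx_def)
    qed
  qed
  then show ?thesis using pn that by simp
qed

theorem lemma2:
  fixes M :: "'a::linorder measure"
    and n K :: nat
    and \<nu> :: "nat \<Rightarrow> real"
    and P :: "nat \<Rightarrow> nat \<Rightarrow> 'a measure"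
    and \<psi> :: "(nat \<Rightarrow> 'a) \<Rightarrow> real"
  assumes "n \<ge> 1"
    and "\<And>\<theta> k. \<theta> \<in> {0, 1} \<Longrightarrow> k \<in> {1..K} \<Longrightarrow> prob_space (P \<theta> k)"
    and "\<And>\<theta> k. \<theta> \<in> {0, 1} \<Longrightarrow> k \<in> {1..K} \<Longrightarrow> sets (P \<theta> k) = sets M"
    and "\<psi> \<in> borel_measurable (prodM n M)"
    and "\<forall>x\<in>space (prodM n M). 0 \<le> \<psi> x \<and> \<psi> x \<le> 1"
  shows "\<exists>\<phi>. \<phi> \<in> borel_measurable (prodM n M) \<and>
             (\<forall>x\<in>space (prodM n M). 0 \<le> \<phi> x \<and> \<phi> x \<le> 1) \<and>
             symmetric_test n M \<phi> \<and>
             P_F n K \<nu> P \<phi> \<le> P_F n K \<nu> P \<psi> \<and>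
             P_M n K \<nu> P \<phi> \<le> P_M n K \<nu> P \<psi>"
proof -
  let ?Perm = "{\<tau>. \<tau> permutes {..<n}}"
  define \<phi> where "\<phi> = (\<lambda>x. (\<Sum>\<tau>\<in>?Perm. \<psi> (permx n \<tau> x)) / fact n)"
  have cardP: "card ?Perm = fact n" using card_permutations[of "{..<n}" n] by simp
  have finP: "finite ?Perm" by (rule finite_permutations) simp
  have pspace: "permx n \<tau> x \<in> space (prodM n M)"
    if "\<tau> permutes {..<n}" "x \<in> space (prodM n M)" for \<tau> x
    using measurable_space[OF permx_meas[OF that(1), of M] that(2)] .
  have mc: "(\<lambda>x. \<psi> (permx n \<tau> x)) \<in> borel_measurable (prodM n M)" if "\<tau> permutes {..<n}" for \<tau>
    using measurable_comp[OF permx_meas[OF that] assms(4)] by (simp add: o_def)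
  have meas: "\<phi> \<in> borel_measurable (prodM n M)"
    unfolding \<phi>_def by (auto intro!: borel_measurable_divide borel_measurable_sum mc)
  have bnd: "0 \<le> \<phi> x \<and> \<phi> x \<le> 1" if x: "x \<in> space (prodM n M)" for x
  proof -
    have b: "0 \<le> \<psi> (permx n \<tau> x) \<and> \<psi> (permx n \<tau> x) \<le> 1" if "\<tau> \<in> ?Perm" for \<tau>
      using assms(5) pspace[of \<tau> x] that x by auto
    have "(\<Sum>\<tau>\<in>?Perm. \<psi> (permx n \<tau> x)) \<le> (\<Sum>\<tau>\<in>?Perm. 1)"
      using b by (intro sum_mono) auto
    then have s1: "(\<Sum>\<tau>\<in>?Perm. \<psi> (permx n \<tau> x)) \<le> fact n" using cardP by simp
    have s0: "0 \<le> (\<Sum>\<tau>\<in>?Perm. \<psi> (permx n \<tau> x))" using b by (intro sum_nonneg) auto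
    show ?thesis unfolding \<phi>_def using s0 s1 by (simp add: divide_le_eq_1)
  qed
  have sym: "symmetric_test n M \<phi>"
    unfolding symmetric_test_def
  proof (intro exI conjI ballI)
    show "\<phi> \<in> borel_measurable (restrict_space (prodM n M) (ordered_pts n M))"
      by (rule measurable_restrict_space1[OF meas])
    show "0 \<le> \<phi> y" "\<phi> y \<le> 1" if "y \<in> ordered_pts n M" for y
      using bnd[of y] that unfolding ordered_pts_def by auto
    fix x assume x: "x \<in> space (prodM n M)"
    obtain \<tau>0 where t0: "\<tau>0 permutes {..<n}" "ord_map n x = permx n \<tau>0 x"
      by (rule ord_map_perm)
    have "(\<Sum>\<tau>\<in>?Perm. \<psi> (permx n \<tau> (permx n \<tau>0 x))) = (\<Sum>\<tau>\<in>?Perm. \<psi> (permx n (\<tau>0 \<circ> \<tau>) x))"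
      by (intro sum.cong refl) (simp add: permx_comp)
    also have "\<dots> = (\<Sum>\<tau>\<in>?Perm. \<psi> (permx n \<tau> x))"
      using setum_permutations_compose_left[OF t0(1), of "\<lambda>\<tau>. \<psi> (permx n \<tau> x)"] by simp
    finally show "\<phi> x = \<phi> (ord_map n x)" unfolding \<phi>_def t0(2) by simp
  qed
  have P0: "\<And>k. k \<in> {1..K} \<Longrightarrow> prob_space (P 0 k)" "\<And>k. k \<in> {1..K} \<Longrightarrow> sets (P 0 k) = sets M"
    "\<And>k. k \<in> {1..K} \<Longrightarrow> prob_space (P 1 k)" "\<And>k. k \<in> {1..K} \<Longrightarrow> sets (P 1 k) = sets M"
    using assms(2,3) by auto
  have F: "P_F n K \<nu> P \<phi> \<le> P_F n K \<nu> P \<psi>"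
  proof (cases "labelings n K \<nu> = {}")
    case True then show ?thesis by (simp add: P_F_def)
  next
    case False
    show ?thesis unfolding P_F_def
      apply (subst Max_le_iff)
      using False finite_labelings avg_bound[where Q="P 0" and K=K and \<nu>=\<nu>, OF P0(1,2) assms(4,5)] unfolding \<phi>_def by auto
  qed
  have eq1: "(\<lambda>x. 1 - \<phi> x) = (\<lambda>x. (\<Sum>\<tau>\<in>?Perm. (\<lambda>y. 1 - \<psi> y) (permx n \<tau> x)) / fact n)"
    unfolding \<phi>_def by (simp add: sum_subtractf cardP diff_divide_distrib)
  have m1: "(\<lambda>y. 1 - \<psi> y) \<in> borel_measurable (prodM n M)" using assms(4) by auto
  have b1: "\<forall>x\<in>space (prodM n M). 0 \<le> 1 - \<psi> x \<and> 1 - \<psi> x \<le> 1" using assms(5) by auto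
  have Mi: "P_M n K \<nu> P \<phi> \<le> P_M n K \<nu> P \<psi>"
  proof (cases "labelings n K \<nu> = {}")
    case True then show ?thesis by (simp add: P_M_def)
  next
    case False
    show ?thesis unfolding P_M_def eq1
      apply (subst Max_le_iff)
      using False finite_labelings avg_bound[where Q="P 1" and K=K and \<nu>=\<nu>, OF P0(3,4) m1 b1] by auto
  qed
  show ?thesis using meas bnd sym F Mi by blast
qed

end
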